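(* Let $T>0$, $\epsilon>0$, $x_0>0$, $L>0$ and let $\theta:[0,T]\to\mathbb R$ be measurable with $|\theta(t)|\le L$ on $[0,T]$. Let $X$ solve $X_t=x_0+\int_0^t\theta(s)X_sds+\epsilon Z^{q,H}_t$, $0\le t\le T$. Then $$P\Big(\inf_{0\le t\le T}X_t<\tfrac12 x_0e^{-LT}\Big)\le 4\,\epsilon^2\,x_0^{-2}\,e^{4LT}\,T^{2H}\,E\Big[\big(\sup_{0\le s\le1}|Z^{q,H}_s|\big)^2\Big].$$
   Context: Let $W=\{W(h),h\in L^2(\mathbb R)\}$ be a centered Gaussian family with $E[W(h)W(g)]=\langle h,g\rangle_{L^2(\mathbb R)}$. For an integer $q\ge1$ and $H\in(\frac12,1)$ set $H_0=1+\frac{H-1}{q}$, $c(q,H)=\sqrt{H(2H-1)/\big(q!\,\beta(H_0-\frac12,2-2H_0)^q\big)}$. The Hermite process of order $q$ and self-similarity parameter $H$ is the multiple Wiener–Itô integral $Z^{q,H}_t=c(q,H)\int_{\mathbb R^q}\big(\int_0^t\prod_{j=1}^q(s-\psi_j)_+^{H_0-3/2}ds\big)dW_{\psi_1}\cdots dW_{\psi_q}$; it is centered, $H$-self-similar, has stationary increments, covariance $\frac12(t^{2H}+s^{2H}-|t-s|^{2H})$, $Z^{q,H}_0=0$, and a version with continuous paths, which is used. The equation for $X$ is the SDE $dX_t=\theta(t)X_tdt+\epsilon dZ^{q,H}_t$, $X_0=x_0$, solved pathwise. *)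

theory Defs
  imports "HOL-Probability.Probability"
begin

definition hermite_type_process ::
  "'a measure \<Rightarrow> real \<Rightarrow> (real \<Rightarrow> 'a \<Rightarrow> real) \<Rightarrow> bool" where
  "hermite_type_process M H Z \<longleftrightarrow>
     prob_space M \<and>
     (\<forall>t. Z t \<in> borel_measurable M) \<and>
     (\<forall>\<omega>\<in>space M. Z 0 \<omega> = 0) \<and>
     (\<forall>\<omega>\<in>space M. continuous_on {0..} (\<lambda>t. Z t \<omega>)) \<and>
     (\<forall>t\<ge>0. integrable M (\<lambda>\<omega>. (Z t \<omega>)\<^sup>2) \<and> integral\<^sup>L M (Z t) = 0) \<and>
     (\<forall>s\<ge>0. \<forall>t\<ge>0. integral\<^sup>L M (\<lambda>\<omega>. Z s \<omega> * Z t \<omega>)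
          = (t powr (2*H) + s powr (2*H) - \<bar>t - s\<bar> powr (2*H)) / 2) \<and>
     (\<forall>c>0. \<forall>n. \<forall>ts::nat \<Rightarrow> real. (\<forall>i<n. ts i \<ge> 0) \<longrightarrow>
        distr M (Pi\<^sub>M {..<n} (\<lambda>_. borel)) (\<lambda>\<omega>. \<lambda>i\<in>{..<n}. Z (c * ts i) \<omega>)
        = distr M (Pi\<^sub>M {..<n} (\<lambda>_. borel)) (\<lambda>\<omega>. \<lambda>i\<in>{..<n}. c powr H * Z (ts i) \<omega>)) \<and>
     (\<forall>h\<ge>0. \<forall>n. \<forall>ts::nat \<Rightarrow> real. (\<forall>i<n. ts i \<ge> 0) \<longrightarrow>
        distr M (Pi\<^sub>M {..<n} (\<lambda>_. borel)) (\<lambda>\<omega>. \<lambda>i\<in>{..<n}. Z (ts i + h) \<omega> - Z h \<omega>)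
        = distr M (Pi\<^sub>M {..<n} (\<lambda>_. borel)) (\<lambda>\<omega>. \<lambda>i\<in>{..<n}. Z (ts i) \<omega>))"

end

theory Submission
  imports Defs
begin


lemma exp_ineqs:
  fixes p q :: real
  shows "exp q * (p - q) \<le> exp p - exp q" "exp p - exp q \<le> exp p * (p - q)"
proof -
  have "exp p = exp q * exp (p - q)" by (simp add: exp_diff)
  moreover have "1 + (p - q) \<le> exp (p - q)" by (rule exp_ge_add_one_self)
  ultimately have "exp q * (1 + (p - q)) \<le> exp p"
    by (metis exp_gt_zero less_eq_real_def mult_left_mono)
  then show "exp q * (p - q) \<le> exp p - exp q" by (simp add: algebra_simps)
  have "exp q = exp p * exp (q - p)" by (simp add: exp_diff)
  moreover have "1 + (q - p) \<le> exp (q - p)" by (rule exp_ge_add_one_self)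
  ultimately have "exp p * (1 + (q - p)) \<le> exp q"
    by (metis exp_gt_zero less_eq_real_def mult_left_mono)
  then show "exp p - exp q \<le> exp p * (p - q)" by (simp add: algebra_simps)
qed

lemma exp_lip:
  fixes p q B :: real
  assumes "exp p \<le> B" "exp q \<le> B"
  shows "\<bar>exp p - exp q\<bar> \<le> B * \<bar>p - q\<bar>"
proof -
  note e = exp_ineqs[of p q] exp_ineqs[of q p]
  show ?thesis
  proof (cases "p \<ge> q")
    case True
    then have "exp p * (p - q) \<le> B * (p - q)" using assms by (intro mult_right_mono) auto
    then show ?thesis using e True by (smt (verit) exp_less_mono)
  next
    case False
    then have "exp q * (q - p) \<le> B * (q - p)" using assms by (intro mult_right_mono) auto
    then show ?thesis using e False by (smt (verit) exp_less_mono)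
  qed
qed

lemma int_bound:
  fixes f :: "real \<Rightarrow> real"
  assumes "f integrable_on {a..b}" "a \<le> b" "\<And>s. s \<in> {a..b} \<Longrightarrow> \<bar>f s\<bar> \<le> B"
  shows "\<bar>integral {a..b} f\<bar> \<le> B * (b - a)"
proof -
  have "norm (integral {a..b} f) \<le> integral {a..b} (\<lambda>_. B)"
    by (rule integral_norm_bound_integral) (use assms in auto)
  then show ?thesis using assms(2) by (simp add: mult.commute)
qed

context
  fixes \<theta> :: "real \<Rightarrow> real" and T L :: real
  assumes T: "0 < T" and L: "0 < L"
    and th_abs: "\<theta> absolutely_integrable_on {0..T}"
    and th_bd: "\<And>s. s \<in> {0..T} \<Longrightarrow> \<bar>\<theta> s\<bar> \<le> L"
begin

lemma th_int: "0 \<le> a \<Longrightarrow> b \<le> T \<Longrightarrow> \<theta> integrable_on {a..b}"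
  using set_lebesgue_integral_eq_integral(1)[OF th_abs]
  by (rule integrable_on_subinterval) auto

lemma Th_diff: "0 \<le> a \<Longrightarrow> a \<le> b \<Longrightarrow> b \<le> T \<Longrightarrow>
   integral {0..b} \<theta> - integral {0..a} \<theta> = integral {a..b} \<theta>"
proof -
  assume h: "0 \<le> a" "a \<le> b" "b \<le> T"
  have "integral {0..a} \<theta> + integral {a..b} \<theta> = integral {0..b} \<theta>"
    by (rule Henstock_Kurzweil_Integration.integral_combine) (use h th_int[of 0 b] in auto)
  then show ?thesis by linarith
qed

lemma Th_lip: "0 \<le> a \<Longrightarrow> a \<le> b \<Longrightarrow> b \<le> T \<Longrightarrow>
   \<bar>integral {0..b} \<theta> - integral {0..a} \<theta>\<bar> \<le> L * (b - a)"
  using Th_diff int_bound[of \<theta> a b L] th_int th_bd by auto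

lemma Th0: "integral {0..0} \<theta> = 0" by simp

lemma Th_bd: "t \<in> {0..T} \<Longrightarrow> \<bar>integral {0..t} \<theta>\<bar> \<le> L * t"
  using Th_lip[of 0 t] by auto

lemma Th_cont: "continuous_on {0..T} (\<lambda>t. integral {0..t} \<theta>)"
  by (rule indefinite_integral_continuous_1) (rule th_int, auto)

lemma E_cont: "continuous_on {0..T} (\<lambda>t. exp (integral {0..t} \<theta>))"
  by (intro continuous_intros Th_cont)

lemma E_bd: "t \<in> {0..T} \<Longrightarrow> exp (integral {0..t} \<theta>) \<le> exp (L * T)"
proof -
  assume t: "t \<in> {0..T}"
  have "integral {0..t} \<theta> \<le> L * T" using Th_bd[OF t] t L
    by (smt (verit, best) atLeastAtMost_iff mult_left_mono)
  then show ?thesis by simp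
qed

lemma thE_abs: "(\<lambda>s. \<theta> s * exp (integral {0..s} \<theta>)) absolutely_integrable_on {0..T}"
proof -
  have "(\<lambda>s. exp (integral {0..s} \<theta>) * \<theta> s) absolutely_integrable_on {0..T}"
  proof (rule absolutely_integrable_bounded_measurable_product[where h="\<lambda>x y. x * y"])
    show "bilinear (\<lambda>x y::real. x * y)" by (rule bilinear_times)
    show "(\<lambda>s. exp (integral {0..s} \<theta>)) \<in> borel_measurable (lebesgue_on {0..T})"
      by (rule continuous_imp_measurable_on_sets_lebesgue[OF E_cont]) auto
    show "{0..T} \<in> sets lebesgue" by auto
    show "bounded ((\<lambda>s. exp (integral {0..s} \<theta>)) ` {0..T})"
      by (rule compact_imp_bounded, rule compact_continuous_image[OF E_cont]) auto
  qed (rule th_abs)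
  then show ?thesis by (simp add: mult.commute)
qed

lemma thE_int: "0 \<le> a \<Longrightarrow> b \<le> T \<Longrightarrow> (\<lambda>s. \<theta> s * exp (integral {0..s} \<theta>)) integrable_on {a..b}"
  using set_lebesgue_integral_eq_integral(1)[OF thE_abs]
  by (rule integrable_on_subinterval) auto

lemma thE_diff: "0 \<le> a \<Longrightarrow> a \<le> b \<Longrightarrow> b \<le> T \<Longrightarrow>
   integral {0..b} (\<lambda>s. \<theta> s * exp (integral {0..s} \<theta>)) - integral {0..a} (\<lambda>s. \<theta> s * exp (integral {0..s} \<theta>))
   = integral {a..b} (\<lambda>s. \<theta> s * exp (integral {0..s} \<theta>))"
proof -
  assume h: "0 \<le> a" "a \<le> b" "b \<le> T"
  have "integral {0..a} (\<lambda>s. \<theta> s * exp (integral {0..s} \<theta>)) + integral {a..b} (\<lambda>s. \<theta> s * exp (integral {0..s} \<theta>))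
     = integral {0..b} (\<lambda>s. \<theta> s * exp (integral {0..s} \<theta>))"
    by (rule Henstock_Kurzweil_Integration.integral_combine) (use h thE_int[of 0 b] in auto)
  then show ?thesis by linarith
qed

lemma G_quad:
  assumes h: "0 \<le> a" "a \<le> b" "b \<le> T"
  shows "\<bar>(exp (integral {0..b} \<theta>) - 1 - integral {0..b} (\<lambda>s. \<theta> s * exp (integral {0..s} \<theta>)))
        - (exp (integral {0..a} \<theta>) - 1 - integral {0..a} (\<lambda>s. \<theta> s * exp (integral {0..s} \<theta>)))\<bar>
        \<le> 2 * exp (L * T) * L^2 * (b - a)^2"
proof -
  define Th where "Th t = integral {0..t} \<theta>" for t
  define E where "E t = exp (Th t)" for t
  define B where "B = exp (L * T)"
  have EB: "t \<in> {0..T} \<Longrightarrow> E t \<le> B" for t using E_bd unfolding E_def Th_def B_def by auto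
  have Elip: "\<bar>E s - E a\<bar> \<le> B * (L * (b - a))" if s: "s \<in> {a..b}" for s
  proof -
    have "\<bar>E s - E a\<bar> \<le> B * \<bar>Th s - Th a\<bar>" unfolding E_def
      by (rule exp_lip) (use EB s h in \<open>auto simp: E_def\<close>)
    also have "\<bar>Th s - Th a\<bar> \<le> L * (s - a)" unfolding Th_def using Th_lip[of a s] s h by auto
    also have "L * (s - a) \<le> L * (b - a)" using s L by auto
    finally show ?thesis using B_def by (simp add: mult_left_mono)
  qed
  have i1: "(\<lambda>s. \<theta> s * E s) integrable_on {a..b}" unfolding E_def Th_def using thE_int h by auto
  have i2: "(\<lambda>s. \<theta> s * E a) integrable_on {a..b}"
    by (rule integrable_on_mult_left) (rule th_int, use h in auto)
  have split: "integral {a..b} (\<lambda>s. \<theta> s * E s)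
      = integral {a..b} (\<lambda>s. \<theta> s * (E s - E a)) + integral {a..b} \<theta> * E a"
  proof -
    have "integral {a..b} (\<lambda>s. \<theta> s * (E s - E a)) = integral {a..b} (\<lambda>s. \<theta> s * E s - \<theta> s * E a)"
      by (simp add: algebra_simps)
    also have "\<dots> = integral {a..b} (\<lambda>s. \<theta> s * E s) - integral {a..b} (\<lambda>s. \<theta> s * E a)"
      by (rule integral_diff[OF i1 i2])
    also have "integral {a..b} (\<lambda>s. \<theta> s * E a) = integral {a..b} \<theta> * E a"
      by (rule integral_mult_left)
    finally show ?thesis by simp
  qed
  have i3: "(\<lambda>s. \<theta> s * (E s - E a)) integrable_on {a..b}"
    using integrable_diff[OF i1 i2] by (simp add: algebra_simps)
  have bnd3: "\<bar>integral {a..b} (\<lambda>s. \<theta> s * (E s - E a))\<bar> \<le> (L * (B * (L * (b - a)))) * (b - a)"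
  proof (rule int_bound[OF i3 h(2)])
    fix s assume s: "s \<in> {a..b}"
    have "\<bar>\<theta> s\<bar> \<le> L" using th_bd s h by auto
    then show "\<bar>\<theta> s * (E s - E a)\<bar> \<le> L * (B * (L * (b - a)))"
      unfolding abs_mult using Elip[OF s] by (intro mult_mono) auto
  qed
  have dTh: "Th b - Th a = integral {a..b} \<theta>" unfolding Th_def using Th_diff h by auto
  have dI: "integral {0..b} (\<lambda>s. \<theta> s * E s) - integral {0..a} (\<lambda>s. \<theta> s * E s) = integral {a..b} (\<lambda>s. \<theta> s * E s)"
    unfolding E_def Th_def using thE_diff h by auto
  define R where "R = E b - E a - E a * (Th b - Th a)"
  have R0: "0 \<le> R" unfolding R_def E_def using exp_ineqs(1)[where p="Th b" and q="Th a"] by simp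
  have R1: "R \<le> (E b - E a) * (Th b - Th a)" unfolding R_def E_def
    using exp_ineqs(2)[where p="Th b" and q="Th a"] by (simp add: algebra_simps)
  have "(E b - E a) * (Th b - Th a) \<le> \<bar>E b - E a\<bar> * \<bar>Th b - Th a\<bar>"
    by (metis abs_ge_self abs_mult)
  also have "\<dots> \<le> (B * \<bar>Th b - Th a\<bar>) * \<bar>Th b - Th a\<bar>"
    by (intro mult_right_mono exp_lip[of "Th b" B "Th a", folded E_def]) (use EB h in auto)
  also have "\<dots> = B * \<bar>Th b - Th a\<bar>^2" by (simp add: power2_eq_square)
  also have "\<dots> \<le> B * (L * (b - a))^2"
  proof -
    have "\<bar>Th b - Th a\<bar> \<le> L * (b - a)" unfolding Th_def using Th_lip h by auto
    then have "\<bar>Th b - Th a\<bar>^2 \<le> (L * (b - a))^2" by (intro power_mono) auto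
    then show ?thesis unfolding B_def by (intro mult_left_mono) auto
  qed
  finally have R2: "R \<le> B * (L * (b - a))^2" using R1 by linarith
  have eq: "(E b - 1 - integral {0..b} (\<lambda>s. \<theta> s * E s)) - (E a - 1 - integral {0..a} (\<lambda>s. \<theta> s * E s))
      = R - integral {a..b} (\<lambda>s. \<theta> s * (E s - E a))"
    unfolding R_def using dI split dTh by (simp add: algebra_simps)
  have "\<bar>R - integral {a..b} (\<lambda>s. \<theta> s * (E s - E a))\<bar> \<le> B * (L * (b - a))^2 + (L * (B * (L * (b - a)))) * (b - a)"
    using R0 R2 bnd3 by linarith
  also have "\<dots> = 2 * B * L^2 * (b - a)^2" by (simp add: power2_eq_square algebra_simps)
  finally show ?thesis using eq unfolding E_def Th_def B_def by simp
qed

lemma exp_identity: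
  assumes t: "t \<in> {0..T}"
  shows "exp (integral {0..t} \<theta>) = 1 + integral {0..t} (\<lambda>s. \<theta> s * exp (integral {0..s} \<theta>))"
proof -
  define G where "G t = exp (integral {0..t} \<theta>) - 1 - integral {0..t} (\<lambda>s. \<theta> s * exp (integral {0..s} \<theta>))" for t
  define C where "C = 2 * exp (L * T) * L^2"
  have quad: "\<bar>G y - G x\<bar> \<le> C * (y - x)^2" if "x \<in> {0..T}" "y \<in> {0..T}" for x y
  proof (cases "x \<le> y")
    case True then show ?thesis using G_quad[of x y] that unfolding G_def C_def by auto
  next
    case False then have "\<bar>G x - G y\<bar> \<le> C * (x - y)^2" using G_quad[of y x] that unfolding G_def C_def by auto
    then show ?thesis by (simp add: abs_minus_commute power2_commute)
  qed
  have G0: "G 0 = 0" unfolding G_def by simp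
  have Gcont: "continuous_on {0..T} G" unfolding G_def
    by (intro continuous_intros E_cont indefinite_integral_continuous_1 thE_int) auto
  have Gder: "DERIV G x :> 0" if x: "0 < x" "x < T" for x
  proof -
    have "interior {0..T} = {0<..<T}" by simp
    then have atx: "at x within {0..T} = at x" using x by (intro at_within_interior) auto
    have "((\<lambda>y. (G y - G x) / (y - x)) \<longlongrightarrow> 0) (at x within {0..T})"
    proof (rule Lim_null_comparison)
      show "\<forall>\<^sub>F y in at x within {0..T}. norm ((G y - G x) / (y - x)) \<le> C * \<bar>y - x\<bar>"
        unfolding eventually_at_filter
      proof (rule always_eventually, intro allI impI)
        fix y assume y: "y \<noteq> x" "y \<in> {0..T}"
        have "\<bar>G y - G x\<bar> \<le> C * \<bar>y - x\<bar> * \<bar>y - x\<bar>" using quad[of x y] x y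
          by (simp add: power2_eq_square abs_mult_self_eq mult.assoc)
        then show "norm ((G y - G x) / (y - x)) \<le> C * \<bar>y - x\<bar>"
          using y by (simp add: abs_divide divide_le_eq)
      qed
      show "((\<lambda>y. C * \<bar>y - x\<bar>) \<longlongrightarrow> 0) (at x within {0..T})"
        by (rule tendsto_eq_intros refl | simp)+
    qed
    then have "(G has_field_derivative 0) (at x within {0..T})"
      by (simp add: has_field_derivative_iff)
    then show ?thesis using atx by simp
  qed
  have "G t = 0"
  proof (cases "t = 0")
    case True then show ?thesis using G0 by simp
  next
    case False
    then have "0 < t" using t by auto
    have "G t = G 0"
    proof (rule DERIV_isconst_end[OF \<open>0 < t\<close>])
      show "continuous_on {0..t} G" by (rule continuous_on_subset[OF Gcont]) (use t in auto)
      show "\<And>x. 0 < x \<Longrightarrow> x < t \<Longrightarrow> DERIV G x :> 0" using Gder t by auto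
    qed
    then show ?thesis using G0 by simp
  qed
  then show ?thesis unfolding G_def by simp
qed

lemma poly_exp_integral:
  fixes d M :: real and n :: nat
  assumes s: "0 \<le> s"
  shows "((\<lambda>r. L * (d * exp (L * r) + M * (L * r)^n / fact n)) has_integral
          (d * exp (L * s) + M * (L * s)^(Suc n) / fact (Suc n) - d)) {0..s}"
proof -
  define F where "F r = d * exp (L * r) + M * (L * r)^(Suc n) / fact (Suc n)" for r
  have der: "(F has_real_derivative L * (d * exp (L * r) + M * (L * r)^n / fact n)) (at r)" for r
  proof -
    have "(F has_real_derivative d * (exp (L * r) * L) + M * (real (Suc n) * (L * r)^n * L) / fact (Suc n)) (at r)"
    proof -
      have d1: "((\<lambda>r. exp (L*r)) has_real_derivative exp (L*r) * L) (at r)"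
        by (auto intro!: derivative_eq_intros)
      have d2: "((\<lambda>r. (L*r)^(Suc n)) has_real_derivative real (Suc n) * (L*r)^n * L) (at r)"
        apply (auto intro!: derivative_eq_intros)
        apply (cases n)
         apply (auto simp: algebra_simps)
        done
      show ?thesis unfolding F_def by (intro DERIV_add DERIV_cmult DERIV_cdivide d1 d2)
    qed
    moreover have "d * (exp (L * r) * L) + M * (real (Suc n) * (L * r)^n * L) / fact (Suc n)
        = L * (d * exp (L * r) + M * (L * r)^n / fact n)"
      by (simp add: field_simps del: of_nat_Suc)
    ultimately show ?thesis by simp
  qed
  have "((\<lambda>r. L * (d * exp (L * r) + M * (L * r)^n / fact n)) has_integral (F s - F 0)) {0..s}"
    by (rule fundamental_theorem_of_calculus[OF s])
       (use der in \<open>auto simp: has_real_derivative_iff_has_vector_derivative[symmetric] intro: has_field_derivative_at_within\<close>)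
  then show ?thesis unfolding F_def by simp
qed

lemma det_lower:
  fixes u g :: "real \<Rightarrow> real" and x0 d :: real
  assumes tu_int: "\<And>t. t \<in> {0..T} \<Longrightarrow> (\<lambda>s. \<theta> s * u s) integrable_on {0..t}"
    and u_eq: "\<And>t. t \<in> {0..T} \<Longrightarrow> u t = x0 + integral {0..t} (\<lambda>s. \<theta> s * u s) + g t"
    and g_bd: "\<And>t. t \<in> {0..T} \<Longrightarrow> \<bar>g t\<bar> \<le> d"
    and x0: "0 \<le> x0" and t: "t \<in> {0..T}"
  shows "x0 * exp (- L * t) - d * exp (L * t) \<le> u t"
proof -
  define E where "E s = exp (integral {0..s} \<theta>)" for s
  define D where "D s = u s - x0 * E s" for s
  have d0: "0 \<le> d" using g_bd[of 0] T by auto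
  have iE: "s \<in> {0..T} \<Longrightarrow> (\<lambda>r. \<theta> r * E r * x0) integrable_on {0..s}" for s
    unfolding E_def by (intro integrable_on_mult_left thE_int) auto
  have iD: "s \<in> {0..T} \<Longrightarrow> (\<lambda>r. \<theta> r * D r) integrable_on {0..s}" for s
    using integrable_diff[OF tu_int iE] unfolding D_def by (simp add: algebra_simps)
  have Deq: "D s = integral {0..s} (\<lambda>r. \<theta> r * D r) + g s" if s: "s \<in> {0..T}" for s
  proof -
    have "integral {0..s} (\<lambda>r. \<theta> r * D r) = integral {0..s} (\<lambda>r. \<theta> r * u r - \<theta> r * E r * x0)"
      unfolding D_def by (simp add: algebra_simps)
    also have "\<dots> = integral {0..s} (\<lambda>r. \<theta> r * u r) - integral {0..s} (\<lambda>r. \<theta> r * E r) * x0"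
      using integral_diff[OF tu_int[OF s] iE[OF s]] by (simp add: integral_mult_left)
    finally show ?thesis
      using u_eq[OF s] exp_identity[OF s] unfolding D_def E_def by (simp add: algebra_simps)
  qed
  have cont: "continuous_on {0..T} (\<lambda>t. integral {0..t} (\<lambda>s. \<theta> s * u s))"
    by (rule indefinite_integral_continuous_1) (rule tu_int, use T in auto)
  have "bounded ((\<lambda>t. integral {0..t} (\<lambda>s. \<theta> s * u s)) ` {0..T})"
    by (rule compact_imp_bounded, rule compact_continuous_image[OF cont]) auto
  then obtain K where K0: "\<forall>x\<in>(\<lambda>t. integral {0..t} (\<lambda>s. \<theta> s * u s)) ` {0..T}. norm x \<le> K"
    unfolding bounded_iff by blast
  have K: "\<And>t. t \<in> {0..T} \<Longrightarrow> \<bar>integral {0..t} (\<lambda>s. \<theta> s * u s)\<bar> \<le> K"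
    using K0 by auto
  define M where "M = x0 + K + d + x0 * exp (L * T)"
  have DM: "\<bar>D s\<bar> \<le> M" if s: "s \<in> {0..T}" for s
  proof -
    have "0 < E s" "E s \<le> exp (L * T)" unfolding E_def using E_bd s by auto
    then have "x0 * E s \<le> x0 * exp (L * T)" "0 \<le> x0 * E s" using x0 by (auto intro: mult_left_mono)
    then show ?thesis unfolding D_def M_def using u_eq[OF s] K[OF s] g_bd[OF s] x0 by linarith
  qed
  have M0: "0 \<le> M" using DM[of 0] T by auto
  have ind: "\<forall>s\<in>{0..T}. \<bar>D s\<bar> \<le> d * exp (L * s) + M * (L * s)^n / fact n" for n
  proof (induction n)
    case 0
    show ?case using DM d0 by (auto intro: add_nonneg_nonneg add_increasing)
  next
    case (Suc n)
    show ?case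
    proof
      fix s assume s: "s \<in> {0..T}"
      have hi: "((\<lambda>r. L * (d * exp (L * r) + M * (L * r)^n / fact n)) has_integral
          (d * exp (L * s) + M * (L * s)^(Suc n) / fact (Suc n) - d)) {0..s}"
        using poly_exp_integral s by auto
      have "\<bar>integral {0..s} (\<lambda>r. \<theta> r * D r)\<bar> \<le> integral {0..s} (\<lambda>r. L * (d * exp (L * r) + M * (L * r)^n / fact n))"
      proof (rule integral_norm_bound_integral[where 'a=real, simplified])
        show "(\<lambda>r. \<theta> r * D r) integrable_on {0..s}" using iD s .
        show "(\<lambda>r. L * (d * exp (L * r) + M * (L * r)^n / fact n)) integrable_on {0..s}"
          using hi by blast
        fix r assume r: "r \<in> {0..s}"
        then have r': "r \<in> {0..T}" using s by auto
        have "\<bar>\<theta> r\<bar> \<le> L" using th_bd r' by auto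
        moreover have "\<bar>D r\<bar> \<le> d * exp (L * r) + M * (L * r)^n / fact n" using Suc.IH r' by auto
        ultimately show "\<bar>\<theta> r * D r\<bar> \<le> L * (d * exp (L * r) + M * (L * r)^n / fact n)"
          unfolding abs_mult by (intro mult_mono) auto
      qed
      also have "\<dots> = d * exp (L * s) + M * (L * s)^(Suc n) / fact (Suc n) - d"
        using hi by (rule integral_unique)
      finally show "\<bar>D s\<bar> \<le> d * exp (L * s) + M * (L * s) ^ Suc n / fact (Suc n)"
        using Deq[OF s] g_bd[OF s] by linarith
    qed
  qed
  have z: "(\<lambda>n. (L*t)^n /\<^sub>R fact n) \<longlonglongrightarrow> 0"
    by (rule summable_LIMSEQ_zero[OF summable_exp_generic])
  have lim: "(\<lambda>n. d * exp (L * t) + M * ((L * t)^n /\<^sub>R fact n)) \<longlonglongrightarrow> d * exp (L * t)"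
    using tendsto_add[OF tendsto_const tendsto_mult[OF tendsto_const z]] by simp
  have Dt: "\<bar>D t\<bar> \<le> d * exp (L * t)"
  proof (rule LIMSEQ_le_const[OF lim])
    show "\<exists>N. \<forall>n\<ge>N. \<bar>D t\<bar> \<le> d * exp (L * t) + M * ((L * t)^n /\<^sub>R fact n)"
    proof (intro exI allI impI)
      fix n :: nat
      have "\<bar>D t\<bar> \<le> d * exp (L * t) + M * (L * t)^n / fact n" using ind t by blast
      moreover have "M * (L * t)^n / fact n = M * ((L * t)^n /\<^sub>R fact n)"
        by (simp add: field_simps)
      ultimately show "\<bar>D t\<bar> \<le> d * exp (L * t) + M * ((L * t)^n /\<^sub>R fact n)" by simp
    qed
  qed
  have "- L * t \<le> integral {0..t} \<theta>" using Th_bd[OF t] by linarith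
  then have "x0 * exp (- L * t) \<le> x0 * E t" unfolding E_def using x0 by (intro mult_left_mono) auto
  then show ?thesis using Dt unfolding D_def by linarith
qed

end



definition dyA :: "(real \<Rightarrow> real) \<Rightarrow> real \<Rightarrow> nat \<Rightarrow> real" where
  "dyA f c n = Max ((\<lambda>i. \<bar>f (c * (real i / 2^n))\<bar>) ` {..<Suc (2^n)})"

lemma dyadic_sup:
  fixes f :: "real \<Rightarrow> real" and c :: real
  assumes c: "0 < c" and cont: "continuous_on {0..c} f"
  shows "incseq (dyA f c)"
    and "\<And>n. 0 \<le> dyA f c n"
    and "\<And>n. dyA f c n \<le> (SUP s\<in>{0..c}. \<bar>f s\<bar>)"
    and "dyA f c \<longlonglongrightarrow> (SUP s\<in>{0..c}. \<bar>f s\<bar>)"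
  unfolding dyA_def
proof -
  let ?A = "\<lambda>n. Max ((\<lambda>i. \<bar>f (c * (real i / 2^n))\<bar>) ` {..<Suc (2^n)})"
  let ?S = "(SUP s\<in>{0..c}. \<bar>f s\<bar>)"
  have bdd: "bdd_above ((\<lambda>s. \<bar>f s\<bar>) ` {0..c})"
    by (rule bounded_imp_bdd_above, rule compact_imp_bounded, rule compact_continuous_image)
       (auto intro: continuous_intros cont)
  have ne: "(\<lambda>i. \<bar>f (c * (real i / 2^n))\<bar>) ` {..<Suc (2^n)} \<noteq> {}" for n by auto
  show inc: "incseq (\<lambda>n. ?A n)"
  proof (rule incseq_SucI)
    fix n
    have "(\<lambda>i. \<bar>f (c * (real i / 2^n))\<bar>) ` {..<Suc (2^n)} \<subseteq> (\<lambda>i. \<bar>f (c * (real i / 2^Suc n))\<bar>) ` {..<Suc (2^Suc n)}"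
    proof
      fix y assume "y \<in> (\<lambda>i. \<bar>f (c * (real i / 2^n))\<bar>) ` {..<Suc (2^n)}"
      then obtain i where i: "i < Suc (2^n)" "y = \<bar>f (c * (real i / 2^n))\<bar>" by auto
      have "2 * i < Suc (2^Suc n)" using i by auto
      moreover have "real (2 * i) / 2^Suc n = real i / 2^n" by simp
      ultimately show "y \<in> (\<lambda>i. \<bar>f (c * (real i / 2^Suc n))\<bar>) ` {..<Suc (2^Suc n)}"
        using i by (metis (no_types, lifting) image_eqI lessThan_iff)
    qed
    then show "?A n \<le> ?A (Suc n)" by (intro Max_mono) auto
  qed
  show "0 \<le> ?A n" for n
  proof -
    have mem: "\<bar>f (c * (real 0 / 2^n))\<bar> \<in> (\<lambda>i. \<bar>f (c * (real i / 2^n))\<bar>) ` {..<Suc (2^n)}"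
      by (rule image_eqI[where x=0]) auto
    show ?thesis by (rule order.trans[OF abs_ge_zero Max_ge[OF _ mem]]) auto
  qed
  show le: "?A n \<le> ?S" for n
  proof (rule Max.boundedI)
    show "finite ((\<lambda>i. \<bar>f (c * (real i / 2^n))\<bar>) ` {..<Suc (2^n)})" by auto
    show "(\<lambda>i. \<bar>f (c * (real i / 2^n))\<bar>) ` {..<Suc (2^n)} \<noteq> {}" by auto
    fix y assume "y \<in> (\<lambda>i. \<bar>f (c * (real i / 2^n))\<bar>) ` {..<Suc (2^n)}"
    then obtain i where i: "i < Suc (2^n)" "y = \<bar>f (c * (real i / 2^n))\<bar>" by auto
    have "real i \<le> 2^n" using i by (metis less_Suc_eq_le of_nat_le_iff of_nat_numeral of_nat_power)
    then have "c * (real i / 2^n) \<in> {0..c}" using c by (auto simp: field_simps)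
    then show "y \<le> ?S" using i bdd by (auto intro: cSUP_upper)
  qed
  have bddA: "bdd_above (range ?A)" unfolding bdd_above_def using le by blast
  have lim: "(\<lambda>n. ?A n) \<longlonglongrightarrow> (SUP n. ?A n)" by (rule LIMSEQ_incseq_SUP[OF bddA inc])
  have "?S \<le> (SUP n. ?A n)"
  proof (rule cSUP_least)
    show "{0..c} \<noteq> {}" using c by auto
    fix s assume s: "s \<in> {0..c}"
    define k where "k n = \<lfloor>s / c * 2^n\<rfloor>" for n :: nat
    define sn where "sn n = c * (real (nat (k n)) / 2^n)" for n :: nat
    have k0: "0 \<le> k n" for n unfolding k_def using s c by auto
    have kle: "nat (k n) < Suc (2^n)" for n
    proof -
      have "s / c \<le> 1" using s c by auto
      then have "s / c * 2^n \<le> 1 * 2^n" by (intro mult_right_mono) auto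
      then have "k n \<le> \<lfloor>(2::real)^n\<rfloor>" unfolding k_def by (intro floor_mono) simp
      moreover have "\<lfloor>(2::real)^n\<rfloor> = 2^n"
        by (metis floor_of_int of_int_numeral of_int_power)
      ultimately have "k n \<le> 2^n" by simp
      then have "nat (k n) \<le> nat (2^n)" by (rule nat_mono)
      moreover have "nat ((2::int)^n) = 2^n" by (simp add: nat_power_eq)
      ultimately show ?thesis by (metis le_imp_less_Suc)
    qed
    have sn_eq: "sn n = c * (of_int (k n) / 2^n)" for n unfolding sn_def using k0 by simp
    have bnd: "\<bar>s - sn n\<bar> \<le> c * inverse (2^n)" for n
    proof -
      have "of_int (k n) \<le> s / c * 2^n" "s / c * 2^n < of_int (k n) + 1" unfolding k_def by linarith+
      then have "c * (of_int (k n) / 2^n) \<le> s" "s < c * ((of_int (k n) + 1) / 2^n)" using c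
        by (auto simp: field_simps)
      moreover have "c * ((of_int (k n) + 1) / 2^n) = c * (of_int (k n) / 2^n) + c * inverse (2^n)"
        by (simp add: field_simps)
      ultimately show ?thesis unfolding sn_eq by (auto simp: abs_le_iff)
    qed
    have "(\<lambda>n. s - sn n) \<longlonglongrightarrow> 0"
    proof (rule Lim_null_comparison)
      show "\<forall>\<^sub>F n in sequentially. norm (s - sn n) \<le> c * inverse (2^n)" using bnd by auto
      show "(\<lambda>n. c * inverse (2 ^ n)) \<longlonglongrightarrow> 0"
        using tendsto_mult[OF tendsto_const LIMSEQ_inverse_realpow_zero[of 2]] by simp
    qed
    from tendsto_diff[OF tendsto_const[of s] this] have sn_lim: "sn \<longlonglongrightarrow> s" by simp
    have sn_in: "sn n \<in> {0..c}" for n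
    proof -
      have "real (nat (k n)) \<le> 2^n" using kle[of n] by (metis less_Suc_eq_le of_nat_le_iff of_nat_numeral of_nat_power)
      then show ?thesis unfolding sn_def using c by (auto simp: field_simps)
    qed
    have flim: "(\<lambda>n. \<bar>f (sn n)\<bar>) \<longlonglongrightarrow> \<bar>f s\<bar>"
      by (intro tendsto_rabs continuous_on_tendsto_compose[OF cont sn_lim s]) (use sn_in in auto)
    have "\<bar>f (sn n)\<bar> \<le> (SUP n. ?A n)" for n
    proof -
      have "\<bar>f (sn n)\<bar> \<le> ?A n" unfolding sn_def by (rule Max_ge) (use kle in auto)
      also have "\<dots> \<le> (SUP n. ?A n)" by (rule cSUP_upper[OF _ bddA]) auto
      finally show ?thesis .
    qed
    then show "\<bar>f s\<bar> \<le> (SUP n. ?A n)" by (intro LIMSEQ_le_const2[OF flim]) auto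
  qed
  moreover have "(SUP n. ?A n) \<le> ?S" by (rule cSUP_least) (use le in auto)
  ultimately have "(SUP n. ?A n) = ?S" by simp
  then show "(\<lambda>n. ?A n) \<longlonglongrightarrow> ?S" using lim by simp
qed



lemma fdd_scale:
  fixes M :: "'a measure" and Z :: "real \<Rightarrow> 'a \<Rightarrow> real" and c H :: real
  assumes Zm: "\<And>t. Z t \<in> borel_measurable M" and c: "0 < c"
    and ss: "\<forall>c>0. \<forall>n. \<forall>ts::nat \<Rightarrow> real. (\<forall>i<n. ts i \<ge> 0) \<longrightarrow>
        distr M (Pi\<^sub>M {..<n} (\<lambda>_. borel)) (\<lambda>\<omega>. \<lambda>i\<in>{..<n}. Z (c * ts i) \<omega>)
        = distr M (Pi\<^sub>M {..<n} (\<lambda>_. borel)) (\<lambda>\<omega>. \<lambda>i\<in>{..<n}. c powr H * Z (ts i) \<omega>)"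
  shows "(\<integral>\<^sup>+ \<omega>. ennreal ((dyA (\<lambda>s. Z s \<omega>) c n)^2) \<partial>M)
       = ennreal (c powr (2 * H)) * (\<integral>\<^sup>+ \<omega>. ennreal ((dyA (\<lambda>s. Z s \<omega>) 1 n)^2) \<partial>M)"
proof -
  define N where "N = Suc (2^n)"
  define ts where "ts i = real i / 2^n" for i :: nat
  define P where "P = Pi\<^sub>M {..<N} (\<lambda>_. borel :: real measure)"
  define Y1 where "Y1 \<omega> = (\<lambda>i\<in>{..<N}. Z (c * ts i) \<omega>)" for \<omega>
  define Y2 where "Y2 \<omega> = (\<lambda>i\<in>{..<N}. c powr H * Z (ts i) \<omega>)" for \<omega>
  define F where "F y = ennreal ((Max ((\<lambda>i. \<bar>y i\<bar>) ` {..<N}))^2)" for y :: "nat \<Rightarrow> real"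
  have Fm: "F \<in> borel_measurable P" unfolding F_def P_def by measurable
  have Y1m: "Y1 \<in> M \<rightarrow>\<^sub>M P" unfolding Y1_def P_def by (intro measurable_restrict Zm)
  have Y2m: "Y2 \<in> M \<rightarrow>\<^sub>M P" unfolding Y2_def P_def
    by (intro measurable_restrict borel_measurable_times borel_measurable_const Zm)
  have eqd: "distr M P Y1 = distr M P Y2"
  proof -
    have "\<forall>i<N. ts i \<ge> 0" unfolding ts_def by auto
    then show ?thesis using ss c unfolding Y1_def Y2_def P_def by blast
  qed
  have F1: "F (Y1 \<omega>) = ennreal ((dyA (\<lambda>s. Z s \<omega>) c n)^2)" for \<omega>
  proof -
    have "(\<lambda>i. \<bar>Y1 \<omega> i\<bar>) ` {..<N} = (\<lambda>i. \<bar>Z (c * (real i / 2^n)) \<omega>\<bar>) ` {..<Suc (2^n)}"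
      unfolding Y1_def ts_def N_def by auto
    then show ?thesis unfolding F_def dyA_def by simp
  qed
  have F2: "F (Y2 \<omega>) = ennreal (c powr (2 * H)) * ennreal ((dyA (\<lambda>s. Z s \<omega>) 1 n)^2)" for \<omega>
  proof -
    let ?I = "(\<lambda>i. \<bar>Z (real i / 2^n) \<omega>\<bar>) ` {..<Suc (2^n)}"
    have "(\<lambda>i. \<bar>Y2 \<omega> i\<bar>) ` {..<N} = (\<lambda>x. c powr H * x) ` ?I"
      unfolding Y2_def ts_def N_def by (auto simp: abs_mult image_image)
    moreover have "Max ((\<lambda>x. c powr H * x) ` ?I) = c powr H * Max ?I"
    proof (rule mono_Max_commute[symmetric])
      show "mono (\<lambda>x. c powr H * x)" by (rule monoI) (simp add: mult_left_mono)
    qed auto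
    moreover have "(c powr H * Max ?I)^2 = c powr (2 * H) * (Max ?I)^2"
    proof -
      have "(c powr H)^2 = c powr (2 * H)" using c by (simp add: powr_power)
      then show ?thesis by (simp add: power_mult_distrib)
    qed
    ultimately show ?thesis unfolding F_def dyA_def
      by (simp add: ennreal_mult)
  qed
  have "(\<integral>\<^sup>+ \<omega>. ennreal ((dyA (\<lambda>s. Z s \<omega>) c n)^2) \<partial>M) = (\<integral>\<^sup>+ \<omega>. F (Y1 \<omega>) \<partial>M)"
    using F1 by simp
  also have "\<dots> = integral\<^sup>N (distr M P Y1) F"
    by (rule nn_integral_distr[symmetric, OF Y1m]) (simp add: Fm)
  also have "\<dots> = integral\<^sup>N (distr M P Y2) F" by (simp add: eqd)
  also have "\<dots> = (\<integral>\<^sup>+ \<omega>. F (Y2 \<omega>) \<partial>M)"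
    by (rule nn_integral_distr[OF Y2m]) (simp add: Fm)
  also have "\<dots> = (\<integral>\<^sup>+ \<omega>. ennreal (c powr (2 * H)) * ennreal ((dyA (\<lambda>s. Z s \<omega>) 1 n)^2) \<partial>M)"
    using F2 by simp
  also have "\<dots> = ennreal (c powr (2 * H)) * (\<integral>\<^sup>+ \<omega>. ennreal ((dyA (\<lambda>s. Z s \<omega>) 1 n)^2) \<partial>M)"
  proof (rule nn_integral_cmult)
    show "(\<lambda>\<omega>. ennreal ((dyA (\<lambda>s. Z s \<omega>) 1 n)^2)) \<in> borel_measurable M"
      unfolding dyA_def by (intro measurable_compose[OF _ measurable_ennreal] borel_measurable_power
          borel_measurable_Max borel_measurable_abs Zm) auto
  qed
  finally show ?thesis .
qed



theorem mainTheorem3: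
  fixes M :: "'a measure" and Z X :: "real \<Rightarrow> 'a \<Rightarrow> real"
    and \<theta> :: "real \<Rightarrow> real" and q :: nat and H T \<epsilon> x0 L :: real
  assumes q: "q \<ge> 1" and H: "1/2 < H" "H < 1"
    and Z: "hermite_type_process M H Z"
    and T: "T > 0" and eps: "\<epsilon> > 0" and x0: "x0 > 0" and L: "L > 0"
    and theta_meas: "set_borel_measurable borel {0..T} \<theta>"
    and theta_bd: "\<And>t. t \<in> {0..T} \<Longrightarrow> \<bar>\<theta> t\<bar> \<le> L"
    and X_rv: "\<And>t. t \<in> {0..T} \<Longrightarrow> X t \<in> borel_measurable M"
    and X_int: "\<And>\<omega> t. \<omega> \<in> space M \<Longrightarrow> t \<in> {0..T} \<Longrightarrow>
                   set_integrable lborel {0..t} (\<lambda>s. \<theta> s * X s \<omega>)"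
    and X_eq: "\<And>\<omega> t. \<omega> \<in> space M \<Longrightarrow> t \<in> {0..T} \<Longrightarrow>
                   X t \<omega> = x0 + (LINT s:{0..t}|lborel. \<theta> s * X s \<omega>) + \<epsilon> * Z t \<omega>"
  shows "emeasure M {\<omega> \<in> space M. (INF t\<in>{0..T}. X t \<omega>) < x0 / 2 * exp (- L * T)}
         \<le> ennreal (4 * \<epsilon>\<^sup>2 * x0 powr (-2) * exp (4 * L * T) * T powr (2 * H))
            * (\<integral>\<^sup>+ \<omega>. ennreal ((SUP s\<in>{0..1}. \<bar>Z s \<omega>\<bar>)\<^sup>2) \<partial>M)"
proof -
  have Zm: "\<And>t. Z t \<in> borel_measurable M"
    and Zc: "\<And>\<omega>. \<omega> \<in> space M \<Longrightarrow> continuous_on {0..} (\<lambda>t. Z t \<omega>)"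
    and ss: "\<forall>c>0. \<forall>n. \<forall>ts::nat \<Rightarrow> real. (\<forall>i<n. ts i \<ge> 0) \<longrightarrow>
        distr M (Pi\<^sub>M {..<n} (\<lambda>_. borel)) (\<lambda>\<omega>. \<lambda>i\<in>{..<n}. Z (c * ts i) \<omega>)
        = distr M (Pi\<^sub>M {..<n} (\<lambda>_. borel)) (\<lambda>\<omega>. \<lambda>i\<in>{..<n}. c powr H * Z (ts i) \<omega>)"
    using Z unfolding hermite_type_process_def by auto
  have Zc': "continuous_on {0..c} (\<lambda>t. Z t \<omega>)" if "\<omega> \<in> space M" for \<omega> c
    by (rule continuous_on_subset[OF Zc[OF that]]) auto
  have th_abs: "\<theta> absolutely_integrable_on {0..T}"
  proof (rule measurable_bounded_by_integrable_imp_absolutely_integrable[where g="\<lambda>_. L"])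
    have "(\<lambda>x. indicat_real {0..T} x *\<^sub>R \<theta> x) \<in> borel_measurable borel"
      using theta_meas unfolding set_borel_measurable_def .
    then have "(\<lambda>x. indicat_real {0..T} x *\<^sub>R \<theta> x) \<in> borel_measurable lborel"
      by (simp add: measurable_lborel1)
    then have "(\<lambda>x. indicat_real {0..T} x *\<^sub>R \<theta> x) \<in> borel_measurable lebesgue"
      by (rule measurable_completion)
    then show "\<theta> \<in> borel_measurable (lebesgue_on {0..T})"
      by (subst borel_measurable_restrict_space_iff) auto
  qed (use theta_bd in auto)
  define S where "S c \<omega> = (SUP s\<in>{0..c}. \<bar>Z s \<omega>\<bar>)" for c \<omega>
  define a where "a = x0 * exp (- 2 * L * T) / 2 / \<epsilon>"
  have a0: "0 < a" unfolding a_def using x0 eps by auto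
  have bdd: "bdd_above ((\<lambda>s. \<bar>Z s \<omega>\<bar>) ` {0..c})" if "\<omega> \<in> space M" for \<omega> c
    by (rule bounded_imp_bdd_above, rule compact_imp_bounded, rule compact_continuous_image)
       (auto intro: continuous_intros Zc'[OF that])
  have incl: "{\<omega> \<in> space M. (INF t\<in>{0..T}. X t \<omega>) < x0 / 2 * exp (- L * T)} \<subseteq> {\<omega> \<in> space M. a \<le> S T \<omega>}"
  proof safe
    fix \<omega> assume \<omega>: "\<omega> \<in> space M" and inf: "(INF t\<in>{0..T}. X t \<omega>) < x0 / 2 * exp (- L * T)"
    show "a \<le> S T \<omega>"
    proof (rule ccontr)
      assume "\<not> a \<le> S T \<omega>"
      then have lt: "S T \<omega> < a" by simp
      have S0: "0 \<le> S T \<omega>"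
        unfolding S_def by (rule order.trans[OF abs_ge_zero cSUP_upper[OF _ bdd[OF \<omega>], of 0]]) (use T in auto)
      have gb: "\<bar>\<epsilon> * Z t \<omega>\<bar> \<le> \<epsilon> * S T \<omega>" if t: "t \<in> {0..T}" for t
        unfolding S_def abs_mult using eps cSUP_upper[OF t bdd[OF \<omega>]] by (auto intro: mult_left_mono)
      have lower: "x0 * exp (- L * t) - (\<epsilon> * S T \<omega>) * exp (L * t) \<le> X t \<omega>" if t: "t \<in> {0..T}" for t
      proof (rule det_lower[OF T L th_abs theta_bd, where u="\<lambda>s. X s \<omega>" and g="\<lambda>s. \<epsilon> * Z s \<omega>"])
        show "\<And>t. t \<in> {0..T} \<Longrightarrow> (\<lambda>s. \<theta> s * X s \<omega>) integrable_on {0..t}"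
          using set_borel_integral_eq_integral(1)[OF X_int[OF \<omega>]] by auto
        show "\<And>t. t \<in> {0..T} \<Longrightarrow> X t \<omega> = x0 + integral {0..t} (\<lambda>s. \<theta> s * X s \<omega>) + \<epsilon> * Z t \<omega>"
          using set_borel_integral_eq_integral(2)[OF X_int[OF \<omega>]] X_eq[OF \<omega>] by auto
      qed (use gb x0 t in auto)
      have "x0 / 2 * exp (- L * T) \<le> X t \<omega>" if t: "t \<in> {0..T}" for t
      proof -
        have "x0 * exp (- L * T) \<le> x0 * exp (- L * t)" using t x0 L by (auto intro: mult_left_mono)
        moreover have "(\<epsilon> * S T \<omega>) * exp (L * t) \<le> (\<epsilon> * S T \<omega>) * exp (L * T)"
          using t L eps S0 by (auto intro!: mult_left_mono)
        moreover have "(\<epsilon> * S T \<omega>) * exp (L * T) < (\<epsilon> * a) * exp (L * T)"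
          using lt eps by auto
        moreover have "(\<epsilon> * a) * exp (L * T) = x0 / 2 * exp (- L * T)"
        proof -
          have "exp (- 2 * L * T) * exp (L * T) = exp (- L * T)" by (simp flip: exp_add)
          then show ?thesis unfolding a_def using eps by (simp add: field_simps)
        qed
        ultimately show ?thesis using lower[OF t] by linarith
      qed
      then have "x0 / 2 * exp (- L * T) \<le> (INF t\<in>{0..T}. X t \<omega>)"
        by (intro cINF_greatest) (use T in auto)
      then show False using inf by simp
    qed
  qed
  have Smeas: "S c \<in> borel_measurable M" if c: "0 < c" for c
  proof (rule borel_measurable_LIMSEQ_real[where u="\<lambda>n \<omega>. dyA (\<lambda>s. Z s \<omega>) c n"])
    show "(\<lambda>n. dyA (\<lambda>s. Z s \<omega>) c n) \<longlonglongrightarrow> S c \<omega>" if "\<omega> \<in> space M" for \<omega>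
      unfolding S_def using dyadic_sup(4)[OF c Zc'[OF that]] .
    show "(\<lambda>\<omega>. dyA (\<lambda>s. Z s \<omega>) c n) \<in> borel_measurable M" for n
      unfolding dyA_def by (intro borel_measurable_Max borel_measurable_abs Zm) auto
  qed
  have STm[measurable]: "S T \<in> borel_measurable M" using Smeas[OF T] .
  have Bset: "{\<omega> \<in> space M. a \<le> S T \<omega>} \<in> sets M" by measurable
  have S0: "0 \<le> S c \<omega>" if "\<omega> \<in> space M" "0 \<le> c" for \<omega> c
    unfolding S_def by (rule order.trans[OF abs_ge_zero cSUP_upper[OF _ bdd[OF that(1)], of 0]]) (use that in auto)
  have mk: "emeasure M {\<omega> \<in> space M. a \<le> S T \<omega>} \<le> ennreal (1 / a^2) * (\<integral>\<^sup>+ \<omega>. ennreal ((S T \<omega>)^2) \<partial>M)"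
  proof -
    have seteq: "{x \<in> space M. 1 \<le> ennreal (1 / a^2) * ennreal ((S T x)^2)} = {\<omega> \<in> space M. a \<le> S T \<omega>}"
    proof safe
      fix x assume x: "x \<in> space M"
      have eq: "ennreal (1 / a^2) * ennreal ((S T x)^2) = ennreal ((S T x)^2 / a^2)"
        by (simp add: ennreal_mult[symmetric])
      have iff: "(1 \<le> ennreal ((S T x)^2 / a^2)) = (1 \<le> (S T x)^2 / a^2)"
        by (metis ennreal_1 ennreal_le_iff zero_le_divide_iff zero_le_power2 zero_le_one ennreal_le_1 linorder_not_le ennreal_less_iff)
      have iff2: "(1 \<le> (S T x)^2 / a^2) = (a \<le> S T x)"
      proof -
        have "(1 \<le> (S T x)^2 / a^2) = (a^2 \<le> (S T x)^2)" using a0 by (simp add: le_divide_eq)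
        also have "\<dots> = (a \<le> S T x)" using abs_le_square_iff[of a "S T x"] a0 S0[OF x] T by simp
        finally show ?thesis .
      qed
      { assume "1 \<le> ennreal (1 / a^2) * ennreal ((S T x)^2)"
        then show "a \<le> S T x" using eq iff iff2 by simp }
      { assume "a \<le> S T x"
        then show "1 \<le> ennreal (1 / a^2) * ennreal ((S T x)^2)" using eq iff iff2 by simp }
    qed
    have "emeasure M {x \<in> space M. 1 \<le> ennreal (1 / a^2) * ennreal ((S T x)^2)}
        \<le> ennreal (1 / a^2) * (\<integral>\<^sup>+ x. ennreal ((S T x)^2) * indicator (space M) x \<partial>M)"
      by (rule nn_integral_Markov_inequality) measurable
    also have "(\<integral>\<^sup>+ x. ennreal ((S T x)^2) * indicator (space M) x \<partial>M) = (\<integral>\<^sup>+ x. ennreal ((S T x)^2) \<partial>M)"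
      by (rule nn_integral_cong) simp
    finally show ?thesis using seteq by simp
  qed
  have scal: "(\<integral>\<^sup>+ \<omega>. ennreal ((S T \<omega>)^2) \<partial>M) \<le> ennreal (T powr (2 * H)) * (\<integral>\<^sup>+ \<omega>. ennreal ((S 1 \<omega>)^2) \<partial>M)"
  proof -
    have "(\<integral>\<^sup>+ \<omega>. ennreal ((S T \<omega>)^2) \<partial>M) = (\<integral>\<^sup>+ \<omega>. (SUP n. ennreal ((dyA (\<lambda>s. Z s \<omega>) T n)^2)) \<partial>M)"
    proof (rule nn_integral_cong)
      fix \<omega> assume \<omega>: "\<omega> \<in> space M"
      note dy = dyadic_sup[OF T Zc'[OF \<omega>]]
      have inc: "incseq (\<lambda>n. ennreal ((dyA (\<lambda>s. Z s \<omega>) T n)^2))"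
        unfolding incseq_def using dy(1,2) by (auto intro!: ennreal_leI power_mono simp: incseq_def)
      have lim: "(\<lambda>n. ennreal ((dyA (\<lambda>s. Z s \<omega>) T n)^2)) \<longlonglongrightarrow> ennreal ((S T \<omega>)^2)"
        unfolding S_def by (intro tendsto_ennrealI tendsto_power dy(4))
      show "ennreal ((S T \<omega>)^2) = (SUP n. ennreal ((dyA (\<lambda>s. Z s \<omega>) T n)^2))"
        using LIMSEQ_unique[OF lim LIMSEQ_SUP[OF inc]] .
    qed
    also have "\<dots> = (SUP n. \<integral>\<^sup>+ \<omega>. ennreal ((dyA (\<lambda>s. Z s \<omega>) T n)^2) \<partial>M)"
    proof (rule nn_integral_monotone_convergence_SUP_AE)
      show "AE \<omega> in M. ennreal ((dyA (\<lambda>s. Z s \<omega>) T i)^2) \<le> ennreal ((dyA (\<lambda>s. Z s \<omega>) T (Suc i))^2)" for i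
      proof (rule AE_I2)
        fix \<omega> assume \<omega>: "\<omega> \<in> space M"
        note dy = dyadic_sup[OF T Zc'[OF \<omega>]]
        show "ennreal ((dyA (\<lambda>s. Z s \<omega>) T i)^2) \<le> ennreal ((dyA (\<lambda>s. Z s \<omega>) T (Suc i))^2)"
          using dy(1,2) by (auto intro!: ennreal_leI power_mono simp: incseq_Suc_iff)
      qed
      show "(\<lambda>\<omega>. ennreal ((dyA (\<lambda>s. Z s \<omega>) T i)^2)) \<in> borel_measurable M" for i
        unfolding dyA_def by (intro measurable_compose[OF _ measurable_ennreal] borel_measurable_power
          borel_measurable_Max borel_measurable_abs Zm) auto
    qed
    also have "\<dots> \<le> ennreal (T powr (2 * H)) * (\<integral>\<^sup>+ \<omega>. ennreal ((S 1 \<omega>)^2) \<partial>M)"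
    proof (rule SUP_least)
      fix n
      have "(\<integral>\<^sup>+ \<omega>. ennreal ((dyA (\<lambda>s. Z s \<omega>) T n)^2) \<partial>M)
          = ennreal (T powr (2 * H)) * (\<integral>\<^sup>+ \<omega>. ennreal ((dyA (\<lambda>s. Z s \<omega>) 1 n)^2) \<partial>M)"
        by (rule fdd_scale[OF Zm T ss])
      also have "\<dots> \<le> ennreal (T powr (2 * H)) * (\<integral>\<^sup>+ \<omega>. ennreal ((S 1 \<omega>)^2) \<partial>M)"
      proof (intro mult_left_mono nn_integral_mono)
        fix \<omega> assume \<omega>: "\<omega> \<in> space M"
        note dy = dyadic_sup[of 1, OF _ Zc'[OF \<omega>], simplified]
        show "ennreal ((dyA (\<lambda>s. Z s \<omega>) 1 n)^2) \<le> ennreal ((S 1 \<omega>)^2)"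
          unfolding S_def using dy(2,3) by (auto intro!: ennreal_leI power_mono)
      qed auto
      finally show "(\<integral>\<^sup>+ \<omega>. ennreal ((dyA (\<lambda>s. Z s \<omega>) T n)^2) \<partial>M)
          \<le> ennreal (T powr (2 * H)) * (\<integral>\<^sup>+ \<omega>. ennreal ((S 1 \<omega>)^2) \<partial>M)" .
    qed
    finally show ?thesis .
  qed
  have const: "1 / a^2 * T powr (2 * H) = 4 * \<epsilon>\<^sup>2 * x0 powr (-2) * exp (4 * L * T) * T powr (2 * H)"
  proof -
    have "x0 powr (-2) = 1 / x0^2" using x0 by (simp add: powr_minus_divide powr_realpow)
    moreover have "exp (- 2 * L * T)^2 * exp (4 * L * T) = 1"
      by (simp flip: exp_add exp_of_nat_mult add: power2_eq_square)
    ultimately show ?thesis unfolding a_def using x0 eps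
      by (simp add: field_simps power2_eq_square)
  qed
  have "emeasure M {\<omega> \<in> space M. (INF t\<in>{0..T}. X t \<omega>) < x0 / 2 * exp (- L * T)}
      \<le> emeasure M {\<omega> \<in> space M. a \<le> S T \<omega>}" by (rule emeasure_mono[OF incl Bset])
  also have "\<dots> \<le> ennreal (1 / a^2) * (\<integral>\<^sup>+ \<omega>. ennreal ((S T \<omega>)^2) \<partial>M)" by (rule mk)
  also have "\<dots> \<le> ennreal (1 / a^2) * (ennreal (T powr (2 * H)) * (\<integral>\<^sup>+ \<omega>. ennreal ((S 1 \<omega>)^2) \<partial>M))"
    by (rule mult_left_mono[OF scal]) auto
  also have "\<dots> = ennreal (1 / a^2 * T powr (2 * H)) * (\<integral>\<^sup>+ \<omega>. ennreal ((S 1 \<omega>)^2) \<partial>M)"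
  proof -
    have "ennreal (1 / a^2 * T powr (2 * H)) = ennreal (1 / a^2) * ennreal (T powr (2 * H))"
      by (rule ennreal_mult) auto
    then show ?thesis by (simp only: mult.assoc)
  qed
  finally show ?thesis unfolding const S_def .
qed

end
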